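(* Let $G=(V,E)$ be a graph and $S\subseteq V$ with $|S|=k$ such that every connected component of $G-S$ is a clique or a tree; let $\mathcal{C}$ be the set of these components, and label the components as described in the context. Let $P$ be a cycle of $G$ with $P\cap S\neq\emptyset$, let $P_1,\dots,P_l$ be its fragments in the order they appear on $P$, and for each $i$ let $v_i\in S$ be such that $P_i$ is a $v_i$–$v_{i+1}$ path (indices modulo $l$). Then there is a cycle $P'$ of $G$ that decomposes into $l$ fragments $P'_1,\dots,P'_l$ such that each $P'_i$ is a $v_i$–$v_{i+1}$ path, the internal vertices of each $P'_i$ (if any) belong to a component labeled $(v_i,v_{i+1})$, and $|P|\le|P'|$.
   Context: $G$ is a simple undirected graph. A fragment of a cycle $P$ is a subpath of $P$ whose two endpoints lie in $S$ and which contains no other vertex of $S$. For (possibly equal) $u,v\in S$ and $C\in\mathcal{C}$ define $q(C,u,v)$: (i) if $N(u)\cap C=\emptyset$ or $N(v)\cap C=\emptyset$, $q(C,u,v)=-\infty$; (ii) if $C$ is a clique and $N(u)\cap C=N(v)\cap C=\{w\}$ for a single vertex $w$, $q(C,u,v)=2$; (iii) if $C$ is a clique and neither (i) nor (ii) holds, $q(C,u,v)=|C|+1$; (iv) if $C$ is a tree and (i) does not hold, $q(C,u,v)$ equals two plus the maximum, over $w_u\in N(u)\cap C$ and $w_v\in N(v)\cap C$, of the length of the $w_u$–$w_v$ path in $C$. Labeling: for each ordered pair (possibly equal) $u,v\in S$, among the components $C\in\mathcal{C}$ with $q(C,u,v)>0$, the $k$ with largest $q(C,u,v)$ (ties broken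 arbitrarily; all of them if fewer than $k$) receive the label $(u,v)$. A component may receive several labels. *)

theory Defs
  imports Main "HOL-Library.Extended_Real"
begin

definition simple_graph :: "'a set \<Rightarrow> ('a \<Rightarrow> 'a \<Rightarrow> bool) \<Rightarrow> bool" where
  "simple_graph V E \<longleftrightarrow> finite V \<and> (\<forall>x y. E x y \<longrightarrow> x \<in> V \<and> y \<in> V)
     \<and> (\<forall>x y. E x y \<longrightarrow> E y x) \<and> (\<forall>x. \<not> E x x)"

definition nbhd :: "('a \<Rightarrow> 'a \<Rightarrow> bool) \<Rightarrow> 'a \<Rightarrow> 'a set" where
  "nbhd E u = {w. E u w}"

(* A cycle, given by its cyclic vertex sequence x_0,...,x_{m-1}; its length |P| is m. *)
definition is_cycle :: "('a \<Rightarrow> 'a \<Rightarrow> bool) \<Rightarrow> 'a list \<Rightarrow> bool" where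
  "is_cycle E xs \<longleftrightarrow> length xs \<ge> 3 \<and> distinct xs \<and>
     (\<forall>i < length xs. E (xs ! i) (xs ! ((Suc i) mod length xs)))"

definition is_path_in :: "('a \<Rightarrow> 'a \<Rightarrow> bool) \<Rightarrow> 'a set \<Rightarrow> 'a list \<Rightarrow> 'a \<Rightarrow> 'a \<Rightarrow> bool" where
  "is_path_in E C p a b \<longleftrightarrow> p \<noteq> [] \<and> hd p = a \<and> last p = b \<and> distinct p \<and> set p \<subseteq> C \<and>
     (\<forall>i. Suc i < length p \<longrightarrow> E (p ! i) (p ! Suc i))"

definition reach_in :: "('a \<Rightarrow> 'a \<Rightarrow> bool) \<Rightarrow> 'a set \<Rightarrow> 'a \<Rightarrow> 'a \<Rightarrow> bool" where
  "reach_in E W = (\<lambda>x y. E x y \<and> x \<in> W \<and> y \<in> W)\<^sup>*\<^sup>*"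

definition components :: "'a set \<Rightarrow> ('a \<Rightarrow> 'a \<Rightarrow> bool) \<Rightarrow> 'a set \<Rightarrow> 'a set set" where
  "components V E S = {{y \<in> V - S. reach_in E (V - S) x y} | x. x \<in> V - S}"

definition is_clique :: "('a \<Rightarrow> 'a \<Rightarrow> bool) \<Rightarrow> 'a set \<Rightarrow> bool" where
  "is_clique E C \<longleftrightarrow> (\<forall>x\<in>C. \<forall>y\<in>C. x \<noteq> y \<longrightarrow> E x y)"

definition is_tree :: "('a \<Rightarrow> 'a \<Rightarrow> bool) \<Rightarrow> 'a set \<Rightarrow> bool" where
  "is_tree E C \<longleftrightarrow> C \<noteq> {} \<and> (\<forall>a\<in>C. \<forall>b\<in>C. \<exists>p. is_path_in E C p a b)
     \<and> \<not> (\<exists>xs. is_cycle E xs \<and> set xs \<subseteq> C)"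

(* q(C,u,v); -\<infinity> encoded as the ereal -\<infinity>. In case (iv) the maximum over w_u, w_v of the
   length (number of edges) of the (unique) w_u--w_v path in the tree C. *)
definition qval :: "('a \<Rightarrow> 'a \<Rightarrow> bool) \<Rightarrow> 'a set \<Rightarrow> 'a \<Rightarrow> 'a \<Rightarrow> ereal" where
  "qval E C u v =
    (if nbhd E u \<inter> C = {} \<or> nbhd E v \<inter> C = {} then -\<infinity>
     else if is_clique E C then
       (if \<exists>w. nbhd E u \<inter> C = {w} \<and> nbhd E v \<inter> C = {w} then 2
        else ereal (real (card C + 1)))
     else ereal (real (2 + Max {length p - 1 | p wu wv. wu \<in> nbhd E u \<inter> C \<and> wv \<in> nbhd E v \<inter> C
                                  \<and> is_path_in E C p wu wv})))"

(* lab u v = set of components receiving the label (u,v): a valid choice of the k components with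
   largest positive q (all of them if fewer than k), ties broken arbitrarily. *)
definition valid_labeling :: "'a set \<Rightarrow> ('a \<Rightarrow> 'a \<Rightarrow> bool) \<Rightarrow> 'a set \<Rightarrow> nat \<Rightarrow> ('a \<Rightarrow> 'a \<Rightarrow> 'a set set) \<Rightarrow> bool" where
  "valid_labeling V E S k lab \<longleftrightarrow>
    (\<forall>u\<in>S. \<forall>v\<in>S.
      (let Pos = {C \<in> components V E S. qval E C u v > 0} in
        lab u v \<subseteq> Pos \<and> card (lab u v) = min k (card Pos) \<and>
        (\<forall>C\<in>lab u v. \<forall>C'\<in>Pos - lab u v. qval E C' u v \<le> qval E C u v)))"

(* The cycle xs (written starting at v_1) decomposes into fragments: frags = [(v_1,I_1),...,(v_l,I_l)],
   with xs = v_1 I_1 v_2 I_2 ... v_l I_l, v_i \<in> S, and I_i (internal vertices of the i-th fragment,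
   a v_i--v_{i+1} path, indices mod l) containing no vertex of S. *)
definition fragment_decomp :: "'a set \<Rightarrow> 'a list \<Rightarrow> ('a \<times> 'a list) list \<Rightarrow> bool" where
  "fragment_decomp S xs frags \<longleftrightarrow> frags \<noteq> [] \<and>
     xs = concat (map (\<lambda>(v, I). v # I) frags) \<and>
     (\<forall>(v, I) \<in> set frags. v \<in> S \<and> set I \<inter> S = {})"

end

theory Submission
  imports Defs
begin


lemma cycle_iff:
  "is_cycle E xs \<longleftrightarrow> 3 \<le> length xs \<and> distinct xs \<and> successively E (xs @ [hd xs])"
proof (cases "xs = []")
  case True then show ?thesis by (simp add: is_cycle_def)
next
  case False
  have "(\<forall>i < length xs. E (xs ! i) (xs ! ((Suc i) mod length xs))) \<longleftrightarrow>
        (\<forall>i. Suc i < length (xs @ [hd xs]) \<longrightarrow> E ((xs @ [hd xs]) ! i) ((xs @ [hd xs]) ! Suc i))"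
  proof -
    have "\<And>i. i < length xs \<Longrightarrow> (xs @ [hd xs]) ! i = xs ! i" by (simp add: nth_append)
    moreover have "\<And>i. i < length xs \<Longrightarrow> (xs @ [hd xs]) ! Suc i = xs ! ((Suc i) mod length xs)"
      using False by (auto simp: nth_append hd_conv_nth mod_if)
    ultimately show ?thesis by auto
  qed
  then show ?thesis unfolding is_cycle_def successively_conv_nth by blast
qed

lemma all_less_Suc_eq_0_disj: "(\<forall>i<Suc n. P i) \<longleftrightarrow> P 0 \<and> (\<forall>i<n. P (Suc i))"
  using less_Suc_eq_0_disj by auto

lemma distinct_concat_nth:
  "distinct (concat L) \<longleftrightarrow> (\<forall>i<length L. distinct (L!i)) \<and>
     (\<forall>i<length L. \<forall>j<length L. i\<noteq>j \<longrightarrow> set (L!i) \<inter> set (L!j) = {})"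
proof (induction L)
  case Nil then show ?case by simp
next
  case (Cons a L)
  have "set a \<inter> \<Union> (set ` set L) = {} \<longleftrightarrow> (\<forall>j<length L. set a \<inter> set (L!j) = {})"
  proof -
    have "set a \<inter> \<Union> (set ` set L) = {} \<longleftrightarrow> (\<forall>X\<in>set L. set a \<inter> set X = {})" by blast
    then show ?thesis by (simp add: all_set_conv_all_nth)
  qed
  moreover have "(\<forall>i<length (a#L). distinct ((a#L)!i)) \<longleftrightarrow> distinct a \<and> (\<forall>i<length L. distinct (L!i))"
    by (simp only: length_Cons all_less_Suc_eq_0_disj nth_Cons_0 nth_Cons_Suc)
  moreover have "(\<forall>i<length (a#L). \<forall>j<length (a#L). i\<noteq>j \<longrightarrow> set ((a#L)!i) \<inter> set ((a#L)!j) = {})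
      \<longleftrightarrow> (\<forall>j<length L. set a \<inter> set (L!j) = {}) \<and>
          (\<forall>i<length L. \<forall>j<length L. i\<noteq>j \<longrightarrow> set (L!i) \<inter> set (L!j) = {})"
    apply (simp only: length_Cons all_less_Suc_eq_0_disj nth_Cons_0 nth_Cons_Suc)
    apply (simp add: Int_commute)
    by blast
  ultimately show ?case using Cons.IH by simp blast
qed

lemma succ_app_hd:
  "R \<noteq> [] \<Longrightarrow> successively E (p @ R) \<longleftrightarrow> successively E (p @ [hd R]) \<and> successively E R"
  by (cases R) (auto simp: successively_append_iff)

definition nxt :: "('a \<times> 'a list) list \<Rightarrow> 'a \<Rightarrow> nat \<Rightarrow> 'a" where
  "nxt fr w i = (if Suc i < length fr then fst (fr ! Suc i) else w)"

lemma chain_concat: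
  "fr \<noteq> [] \<Longrightarrow> successively E (concat (map (\<lambda>(v,I). v#I) fr) @ [w]) \<longleftrightarrow>
     (\<forall>i<length fr. successively E (fst (fr!i) # snd (fr!i) @ [nxt fr w i]))"
proof (induction fr)
  case Nil then show ?case by simp
next
  case (Cons a fr)
  obtain v I where a: "a = (v, I)" by force
  show ?case
  proof (cases "fr = []")
    case True then show ?thesis by (simp add: a nxt_def)
  next
    case False
    obtain v' I' fr' where fr: "fr = (v',I') # fr'" using False by (cases fr) auto
    have "successively E (concat (map (\<lambda>(v,I). v#I) (a#fr)) @ [w]) \<longleftrightarrow>
       successively E ((v # I) @ (concat (map (\<lambda>(v,I). v#I) fr) @ [w]))" by (simp add: a)
    also have "\<dots> \<longleftrightarrow> successively E (v # I @ [v']) \<and> successively E (concat (map (\<lambda>(v,I). v#I) fr) @ [w])"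
      using succ_app_hd[of "concat (map (\<lambda>(v,I). v#I) fr) @ [w]" E "v#I"] by (simp add: fr)
    also have "\<dots> \<longleftrightarrow> successively E (v # I @ [v']) \<and> (\<forall>i<length fr. successively E (fst (fr!i) # snd (fr!i) @ [nxt fr w i]))"
      using Cons.IH False by simp
    also have "\<dots> \<longleftrightarrow> (\<forall>i<length (a#fr). successively E (fst ((a#fr)!i) # snd ((a#fr)!i) @ [nxt (a#fr) w i]))"
      by (simp add: all_less_Suc_eq_0_disj a nxt_def fr)
    finally show ?thesis .
  qed
qed



lemma reach_sym:
  assumes sym: "\<forall>x y. E x y \<longrightarrow> E y x" and r: "reach_in E W x y"
  shows "reach_in E W y x"
  using r unfolding reach_in_def
proof (induction rule: rtranclp_induct)
  case base then show ?case by simp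
next
  case (step y z)
  have "E z y" using sym step(2) by blast
  then have "(\<lambda>x y. E x y \<and> x \<in> W \<and> y \<in> W) z y" using step(2) by simp
  then show ?case using step(3) by (rule converse_rtranclp_into_rtranclp)
qed

lemma comp_sub: "D \<in> components V E S \<Longrightarrow> D \<subseteq> V - S"
  unfolding components_def by auto

lemma comp_finite: assumes "finite V" "D \<in> components V E S" shows "finite D"
proof -
  have "D \<subseteq> V" using comp_sub[OF assms(2)] by blast
  then show ?thesis using assms(1) by (rule finite_subset)
qed

lemma comp_eq:
  assumes sym: "\<forall>x y. E x y \<longrightarrow> E y x"
    and D1: "D1 \<in> components V E S" and D2: "D2 \<in> components V E S"
    and y: "y \<in> D1" "y \<in> D2"
  shows "D1 = D2"
proof -
  obtain x1 where x1: "D1 = {y \<in> V - S. reach_in E (V - S) x1 y}" using D1 unfolding components_def by auto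
  obtain x2 where x2: "D2 = {y \<in> V - S. reach_in E (V - S) x2 y}" using D2 unfolding components_def by auto
  have r1: "reach_in E (V - S) x1 y" and r2: "reach_in E (V - S) x2 y" using x1 x2 y by auto
  have a1: "reach_in E (V-S) x1 x2" using r1 reach_sym[OF sym r2] unfolding reach_in_def by (rule rtranclp_trans)
  have a2: "reach_in E (V-S) x2 x1" using reach_sym[OF sym a1] .
  have a: "(\<lambda>x y. E x y \<and> x \<in> V - S \<and> y \<in> V - S)\<^sup>*\<^sup>* x1 x2"
    "(\<lambda>x y. E x y \<and> x \<in> V - S \<and> y \<in> V - S)\<^sup>*\<^sup>* x2 x1" using a1 a2 unfolding reach_in_def by -
  have "reach_in E (V - S) x1 z \<longleftrightarrow> reach_in E (V - S) x2 z" for z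
    unfolding reach_in_def
  proof
    assume "(\<lambda>x y. E x y \<and> x \<in> V - S \<and> y \<in> V - S)\<^sup>*\<^sup>* x1 z"
    then show "(\<lambda>x y. E x y \<and> x \<in> V - S \<and> y \<in> V - S)\<^sup>*\<^sup>* x2 z" by (rule rtranclp_trans[OF a(2)])
  next
    assume "(\<lambda>x y. E x y \<and> x \<in> V - S \<and> y \<in> V - S)\<^sup>*\<^sup>* x2 z"
    then show "(\<lambda>x y. E x y \<and> x \<in> V - S \<and> y \<in> V - S)\<^sup>*\<^sup>* x1 z" by (rule rtranclp_trans[OF a(1)])
  qed
  then show ?thesis unfolding x1 x2 by blast
qed

lemma chain_reach:
  "p \<noteq> [] \<Longrightarrow> successively E p \<Longrightarrow> set p \<subseteq> W \<Longrightarrow> \<forall>x\<in>set p. reach_in E W (hd p) x"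
proof (induction p)
  case Nil then show ?case by simp
next
  case (Cons a p)
  show ?case
  proof (cases "p = []")
    case True then show ?thesis by (simp add: reach_in_def)
  next
    case False
    have h: "\<forall>x\<in>set p. reach_in E W (hd p) x" using Cons False by (simp add: successively_Cons)
    have e: "E a (hd p)" "a \<in> W" "hd p \<in> W" using Cons.prems False by (auto simp: successively_Cons)
    show ?thesis
    proof
      fix x assume "x \<in> set (a # p)"
      then show "reach_in E W (hd (a # p)) x"
      proof (cases "x = a")
        case True then show ?thesis by (simp add: reach_in_def)
      next
        case False
        then have "x \<in> set p" using \<open>x \<in> set (a # p)\<close> by simp
        then have "reach_in E W (hd p) x" using h by blast
        moreover have "(\<lambda>x y. E x y \<and> x \<in> W \<and> y \<in> W) a (hd p)" using e by simp
        ultimately show ?thesis unfolding reach_in_def list.sel(1)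
          by (rule converse_rtranclp_into_rtranclp[rotated])
      qed
    qed
  qed
qed

lemma chain_in_comp:
  assumes "p \<noteq> []" "successively E p" "set p \<subseteq> V - S"
  shows "\<exists>D\<in>components V E S. set p \<subseteq> D"
proof -
  have "hd p \<in> V - S" using assms by (cases p) auto
  then have "{y \<in> V - S. reach_in E (V - S) (hd p) y} \<in> components V E S"
    unfolding components_def by blast
  moreover have "set p \<subseteq> {y \<in> V - S. reach_in E (V - S) (hd p) y}"
    using chain_reach[OF assms] assms(3) by auto
  ultimately show ?thesis by blast
qed

lemma clique_chain: "is_clique E D \<Longrightarrow> distinct p \<Longrightarrow> set p \<subseteq> D \<Longrightarrow> successively E p"
proof (induction p)
  case Nil then show ?case by simp
next
  case (Cons a p)
  then show ?case
    by (cases p) (auto simp: is_clique_def successively_Cons)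
qed

lemma distinct_hd_last: "distinct I \<Longrightarrow> I \<noteq> [] \<Longrightarrow> hd I = last I \<Longrightarrow> length I = 1"
proof (cases I)
  case (Cons x t)
  assume "distinct I" "hd I = last I"
  show ?thesis
  proof (cases "t = []")
    case False
    then have "last t \<in> set t" by simp
    then show ?thesis using Cons \<open>distinct I\<close> \<open>hd I = last I\<close> False by auto
  qed (simp add: Cons)
qed simp

lemma path_in_iff: "is_path_in E C p a b \<longleftrightarrow> p \<noteq> [] \<and> hd p = a \<and> last p = b \<and> distinct p \<and> set p \<subseteq> C \<and> successively E p"
  unfolding is_path_in_def successively_conv_nth by blast

lemma path_len_finite:
  assumes "finite C"
  shows "finite {length p - 1 | p wu wv. wu \<in> nbhd E u \<inter> C \<and> wv \<in> nbhd E v \<inter> C \<and> is_path_in E C p wu wv}"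
proof -
  have "{length p - 1 | p wu wv. wu \<in> nbhd E u \<inter> C \<and> wv \<in> nbhd E v \<inter> C \<and> is_path_in E C p wu wv} \<subseteq> {..card C}"
  proof
    fix n assume "n \<in> {length p - 1 | p wu wv. wu \<in> nbhd E u \<inter> C \<and> wv \<in> nbhd E v \<inter> C \<and> is_path_in E C p wu wv}"
    then obtain p wu wv where "n = length p - 1" "is_path_in E C p wu wv" by blast
    then have "distinct p" "set p \<subseteq> C" unfolding is_path_in_def by auto
    then have "length p \<le> card C" using card_mono[OF assms, of "set p"] distinct_card[of p] by simp
    then show "n \<in> {..card C}" using \<open>n = length p - 1\<close> by simp
  qed
  then show ?thesis using finite_subset by blast
qed



lemma succ_split:
  assumes "I \<noteq> []" "successively E (u # I @ [w])"
  shows "E u (hd I)" "E (last I) w" "successively E I"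
proof -
  show "E u (hd I)" "E (last I) w" "successively E I" using assms
    by (auto simp: successively_Cons successively_append_iff)
qed

lemma succ_join:
  assumes "I \<noteq> []" "E u (hd I)" "E (last I) w" "successively E I"
  shows "successively E (u # I @ [w])"
proof -
  show ?thesis using assms by (auto simp: successively_Cons successively_append_iff)
qed

lemma single_or: assumes "a \<in> A" "\<forall>x\<in>A. x = a" shows "A = {a}"
proof (intro equalityI subsetI)
  fix x assume "x \<in> A" then show "x \<in> {a}" using assms(2) by simp
next
  fix x assume "x \<in> {a}" then show "x \<in> A" using assms(1) by simp
qed

lemma q_lower:
  assumes sym: "\<forall>x y. E x y \<longrightarrow> E y x" and fin: "finite C"
    and ct: "is_clique E C \<or> is_tree E C"
    and I: "I \<noteq> []" "distinct I" "set I \<subseteq> C" "successively E (u # I @ [w])"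
  shows "ereal (real (length I + 1)) \<le> qval E C u w"
proof -
  note sp = succ_split[OF I(1) I(4)]
  have ewl: "E w (last I)" using sym sp(2) by blast
  have hu: "hd I \<in> nbhd E u \<inter> C" using sp(1) I(1,3) by (simp add: nbhd_def subset_iff)
  have hw: "last I \<in> nbhd E w \<inter> C" using ewl I(1,3) by (simp add: nbhd_def subset_iff)
  have ne: "\<not> (nbhd E u \<inter> C = {} \<or> nbhd E w \<inter> C = {})" using hu hw by blast
  show ?thesis
  proof (cases "is_clique E C")
    case True
    show ?thesis
    proof (cases "\<exists>x. nbhd E u \<inter> C = {x} \<and> nbhd E w \<inter> C = {x}")
      case True
      then obtain x where "nbhd E u \<inter> C = {x}" "nbhd E w \<inter> C = {x}" by blast
      then have "hd I = last I" using hu hw by auto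
      then have "length I = 1" using distinct_hd_last I by blast
      then show ?thesis using ne \<open>is_clique E C\<close> True unfolding qval_def by simp
    next
      case False
      have "length I \<le> card C" using card_mono[OF fin I(3)] distinct_card[OF I(2)] by simp
      have q0: "qval E C u w = (if \<exists>x. nbhd E u \<inter> C = {x} \<and> nbhd E w \<inter> C = {x} then 2 else ereal (real (card C + 1)))"
        using ne \<open>is_clique E C\<close> unfolding qval_def by simp
      have q: "qval E C u w = ereal (real (card C + 1))" by (simp only: q0 if_not_P[OF False])
      show ?thesis using \<open>length I \<le> card C\<close> unfolding q by simp
    qed
  next
    case False
    let ?M = "{length p - 1 | p wu wv. wu \<in> nbhd E u \<inter> C \<and> wv \<in> nbhd E w \<inter> C \<and> is_path_in E C p wu wv}"
    have "is_path_in E C I (hd I) (last I)" using I sp(3) by (simp add: path_in_iff)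
    then have "length I - 1 \<in> ?M" using hu hw by blast
    then have "length I - 1 \<le> Max ?M" using path_len_finite[OF fin] by (rule Max_ge[rotated])
    then have "length I + 1 \<le> 2 + Max ?M" by linarith
    then show ?thesis using ne False unfolding qval_def by simp
  qed
qed

lemma q_upper:
  assumes sym: "\<forall>x y. E x y \<longrightarrow> E y x" and fin: "finite D"
    and ct: "is_clique E D \<or> is_tree E D"
    and pos: "0 < qval E D u w"
  shows "\<exists>J. J \<noteq> [] \<and> distinct J \<and> set J \<subseteq> D \<and> successively E (u # J @ [w]) \<and>
             qval E D u w \<le> ereal (real (length J + 1))"
proof -
  have ne: "\<not> (nbhd E u \<inter> D = {} \<or> nbhd E w \<inter> D = {})"
  proof
    assume "nbhd E u \<inter> D = {} \<or> nbhd E w \<inter> D = {}"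
    then have "qval E D u w = -\<infinity>" unfolding qval_def by simp
    then show False using pos by simp
  qed
  show ?thesis
  proof (cases "is_clique E D")
    case cl: True
    show ?thesis
    proof (cases "\<exists>x. nbhd E u \<inter> D = {x} \<and> nbhd E w \<inter> D = {x}")
      case True
      then obtain x where x: "nbhd E u \<inter> D = {x}" "nbhd E w \<inter> D = {x}" by blast
      then have "E u x" "E w x" "x \<in> D" by (auto simp: nbhd_def)
      then have "E x w" using sym by blast
      have q0: "qval E D u w = (if \<exists>x. nbhd E u \<inter> D = {x} \<and> nbhd E w \<inter> D = {x} then 2 else ereal (real (card D + 1)))"
        using ne cl unfolding qval_def by simp
      have q: "qval E D u w = 2" by (simp only: q0 if_P[OF True])
      show ?thesis
        by (rule exI[of _ "[x]"]) (simp add: q \<open>E u x\<close> \<open>E x w\<close> \<open>x \<in> D\<close>)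
    next
      case False
      have q0: "qval E D u w = (if \<exists>x. nbhd E u \<inter> D = {x} \<and> nbhd E w \<inter> D = {x} then 2 else ereal (real (card D + 1)))"
        using ne cl unfolding qval_def by simp
      have q: "qval E D u w = ereal (real (card D + 1))" by (simp only: q0 if_not_P[OF False])
      obtain a b where ab: "a \<in> nbhd E u \<inter> D" "b \<in> nbhd E w \<inter> D" "a \<noteq> b"
      proof -
        obtain a where a: "a \<in> nbhd E u \<inter> D" using ne by blast
        obtain b where b: "b \<in> nbhd E w \<inter> D" using ne by blast
        show ?thesis
        proof (cases "a = b")
          case False then show ?thesis using a b that by blast
        next
          case True
          have "(\<exists>a'. a' \<in> nbhd E u \<inter> D \<and> a' \<noteq> a) \<or> (\<exists>b'. b' \<in> nbhd E w \<inter> D \<and> b' \<noteq> a)"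
          proof (rule ccontr)
            assume nn: "\<not> ((\<exists>a'. a' \<in> nbhd E u \<inter> D \<and> a' \<noteq> a) \<or> (\<exists>b'. b' \<in> nbhd E w \<inter> D \<and> b' \<noteq> a))"
            have "nbhd E u \<inter> D = {a}" using single_or[of a "nbhd E u \<inter> D"] a nn by blast
            moreover have "nbhd E w \<inter> D = {a}" using single_or[of a "nbhd E w \<inter> D"] b True nn by blast
            ultimately show False using False by blast
          qed
          then show ?thesis
          proof
            assume "\<exists>a'. a' \<in> nbhd E u \<inter> D \<and> a' \<noteq> a"
            then obtain a' where "a' \<in> nbhd E u \<inter> D" "a' \<noteq> b" using True by blast
            then show ?thesis using b that by blast
          next
            assume "\<exists>b'. b' \<in> nbhd E w \<inter> D \<and> b' \<noteq> a"
            then obtain b' where "b' \<in> nbhd E w \<inter> D" "a \<noteq> b'" by blast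
            then show ?thesis using a that by blast
          qed
        qed
      qed
      obtain m where m: "distinct m" "set m = D - {a, b}"
        using finite_distinct_list[of "D - {a,b}"] fin by blast
      define J where "J = a # m @ [b]"
      have dJ: "distinct J" using m ab(3) unfolding J_def by auto
      have sJ: "set J = D" using m ab unfolding J_def by auto
      have cJ: "successively E J" using clique_chain[OF cl dJ] sJ by simp
      have eu: "E u (hd J)" using ab unfolding J_def by (simp add: nbhd_def)
      have "E w b" using ab by (simp add: nbhd_def)
      then have ew: "E (last J) w" using sym unfolding J_def by simp
      have lJ: "length J = card D" using distinct_card[OF dJ] sJ by simp
      show ?thesis
        by (rule exI[of _ J]) (use dJ sJ cJ eu ew lJ succ_join[of J E u w] q in \<open>simp add: J_def\<close>)
    qed
  next
    case False
    let ?M = "{length p - 1 | p wu wv. wu \<in> nbhd E u \<inter> D \<and> wv \<in> nbhd E w \<inter> D \<and> is_path_in E D p wu wv}"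
    have tr: "is_tree E D" using ct False by blast
    have q: "qval E D u w = ereal (real (2 + Max ?M))" using ne False unfolding qval_def by simp
    obtain a b where ab: "a \<in> nbhd E u \<inter> D" "b \<in> nbhd E w \<inter> D" using ne by blast
    obtain p0 where "is_path_in E D p0 a b" using tr ab unfolding is_tree_def by blast
    then have "?M \<noteq> {}" using ab by blast
    then have "Max ?M \<in> ?M" using path_len_finite[OF fin] by (rule Max_in[rotated])
    then obtain p wu wv where p: "Max ?M = length p - 1" "wu \<in> nbhd E u \<inter> D" "wv \<in> nbhd E w \<inter> D"
       "is_path_in E D p wu wv" by blast
    then have pp: "p \<noteq> []" "hd p = wu" "last p = wv" "distinct p" "set p \<subseteq> D" "successively E p"
      by (auto simp: path_in_iff)
    have e1: "E u (hd p)" using p(2) pp(2) by (simp add: nbhd_def)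
    have "E w (last p)" using p(3) pp(3) by (simp add: nbhd_def)
    then have e2: "E (last p) w" using sym by blast
    have "successively E (u # p @ [w])" using succ_join[OF pp(1) e1 e2 pp(6)] .
    moreover have "qval E D u w \<le> ereal (real (length p + 1))" using q p(1) pp(1)
      by (cases p) simp_all
    ultimately show ?thesis using pp by blast
  qed
qed



lemma hd_concat_frags: "fr \<noteq> [] \<Longrightarrow> hd (concat (map (\<lambda>(v,I). v#I) fr)) = fst (fr!0)"
  by (cases fr) auto

lemma nxt_mod: "fr \<noteq> [] \<Longrightarrow> i < length fr \<Longrightarrow> nxt fr (fst (fr!0)) i = fst (fr ! (Suc i mod length fr))"
proof (cases "Suc i < length fr")
  case True then show ?thesis by (simp add: nxt_def)
next
  case False
  assume "i < length fr"
  then have "Suc i = length fr" using False by simp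
  then show ?thesis by (simp add: nxt_def)
qed

lemma cyc_frags:
  assumes ne: "fr \<noteq> []"
  shows "is_cycle E (concat (map (\<lambda>(v,I). v#I) fr)) \<longleftrightarrow>
    3 \<le> length (concat (map (\<lambda>(v,I). v#I) fr)) \<and>
    (\<forall>i<length fr. distinct (fst (fr!i) # snd (fr!i))) \<and>
    (\<forall>i<length fr. \<forall>j<length fr. i\<noteq>j \<longrightarrow> set (fst (fr!i) # snd (fr!i)) \<inter> set (fst (fr!j) # snd (fr!j)) = {}) \<and>
    (\<forall>i<length fr. successively E (fst (fr!i) # snd (fr!i) @ [fst (fr ! (Suc i mod length fr))]))"
proof -
  have m: "map (\<lambda>(v,I). v#I) fr ! i = fst (fr!i) # snd (fr!i)" if "i < length fr" for i
    using that by (simp add: case_prod_beta)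
  have d: "distinct (concat (map (\<lambda>(v,I). v#I) fr)) \<longleftrightarrow>
    (\<forall>i<length fr. distinct (fst (fr!i) # snd (fr!i))) \<and>
    (\<forall>i<length fr. \<forall>j<length fr. i\<noteq>j \<longrightarrow> set (fst (fr!i) # snd (fr!i)) \<inter> set (fst (fr!j) # snd (fr!j)) = {})"
    unfolding distinct_concat_nth length_map using m by simp
  have s: "successively E (concat (map (\<lambda>(v,I). v#I) fr) @ [hd (concat (map (\<lambda>(v,I). v#I) fr))]) \<longleftrightarrow>
    (\<forall>i<length fr. successively E (fst (fr!i) # snd (fr!i) @ [fst (fr ! (Suc i mod length fr))]))"
    unfolding hd_concat_frags[OF ne] chain_concat[OF ne] using nxt_mod[OF ne] by simp
  show ?thesis unfolding cycle_iff d s by blast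
qed

lemma len_frags: "length (concat (map (\<lambda>(v,I). v#I) (map (\<lambda>i. (a i, B i)) [0..<l]))) = (\<Sum>i<l. Suc (length (B i)))"
  by (induction l) simp_all



lemma comps_finite: "finite V \<Longrightarrow> finite (components V E S)"
proof -
  assume fin: "finite V"
  have "components V E S \<subseteq> Pow V" using comp_sub by blast
  then show ?thesis using fin by (meson finite_Pow_iff finite_subset)
qed

lemma step_lemma:
  assumes sym: "\<forall>x y. E x y \<longrightarrow> E y x" and finV: "finite V"
   and comps: "\<forall>C \<in> components V E S. is_clique E C \<or> is_tree E C"
   and lab: "valid_labeling V E S k lab"
   and lk: "l \<le> k" and n: "n < l"
   and uS: "u n \<in> S" and wS: "w n \<in> S"
   and a: "successively E (u n # J n @ [w n])"
   and b: "distinct (J n)"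
   and d: "\<forall>i<l. J i \<noteq> [] \<longrightarrow> (\<exists>D\<in>components V E S. set (J i) \<subseteq> D)"
   and Jn: "J n \<noteq> []" "\<not> (\<exists>C\<in>lab (u n) (w n). set (J n) \<subseteq> C)"
  shows "\<exists>J0 D. J0 \<noteq> [] \<and> distinct J0 \<and> successively E (u n # J0 @ [w n]) \<and> length (J n) \<le> length J0
     \<and> D \<in> lab (u n) (w n) \<and> D \<in> components V E S \<and> set J0 \<subseteq> D \<and> (\<forall>j<l. j \<noteq> n \<longrightarrow> set (J j) \<inter> D = {})"
proof -
  let ?comps = "components V E S"
  obtain C where C: "C \<in> ?comps" "set (J n) \<subseteq> C" using d n Jn(1) by blast
  have finC: "finite C" using comp_finite[OF finV C(1)] .
  have ctC: "is_clique E C \<or> is_tree E C" using comps C(1) by blast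
  have qC: "ereal (real (length (J n) + 1)) \<le> qval E C (u n) (w n)"
    using q_lower[OF sym finC ctC Jn(1) b C(2) a] .
  have posC: "0 < qval E C (u n) (w n)"
    using qC by (rule less_le_trans[rotated]) simp
  define Pos where "Pos = {C \<in> ?comps. qval E C (u n) (w n) > 0}"
  have labP: "lab (u n) (w n) \<subseteq> Pos" "card (lab (u n) (w n)) = min k (card Pos)"
     "\<forall>C\<in>lab (u n) (w n). \<forall>C'\<in>Pos - lab (u n) (w n). qval E C' (u n) (w n) \<le> qval E C (u n) (w n)"
    using lab uS wS unfolding valid_labeling_def Let_def Pos_def by blast+
  have CP: "C \<in> Pos" using C(1) posC unfolding Pos_def by blast
  have Cnl: "C \<notin> lab (u n) (w n)" using Jn(2) C(2) by blast
  have finP: "finite Pos" using comps_finite[OF finV] unfolding Pos_def by simp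
  have "lab (u n) (w n) \<subset> Pos" using labP(1) CP Cnl by blast
  then have "card (lab (u n) (w n)) < card Pos" using finP by (rule psubset_card_mono[rotated])
  then have cardlab: "card (lab (u n) (w n)) = k" using labP(2) by simp
  define U where "U = {D \<in> lab (u n) (w n). \<exists>j<l. j \<noteq> n \<and> set (J j) \<inter> D \<noteq> {}}"
  define g where "g j = (SOME D. D \<in> ?comps \<and> set (J j) \<subseteq> D)" for j
  have "U \<subseteq> g ` ({..<l} - {n})"
  proof
    fix D assume "D \<in> U"
    then obtain j where j: "j < l" "j \<noteq> n" "set (J j) \<inter> D \<noteq> {}" "D \<in> lab (u n) (w n)"
      unfolding U_def by blast
    then have "J j \<noteq> []" by auto
    then have "\<exists>D. D \<in> ?comps \<and> set (J j) \<subseteq> D" using d j(1) by blast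
    then have gj: "g j \<in> ?comps \<and> set (J j) \<subseteq> g j" unfolding g_def by (rule someI_ex)
    obtain y where y: "y \<in> set (J j)" "y \<in> D" using j(3) by blast
    have "D \<in> ?comps" using j(4) labP(1) unfolding Pos_def by blast
    then have "D = g j" using comp_eq[OF sym _ _ y(2)] gj y(1) by blast
    then show "D \<in> g ` ({..<l} - {n})" using j by blast
  qed
  moreover have "finite (g ` ({..<l} - {n}))" by simp
  ultimately have "card U \<le> card (g ` ({..<l} - {n}))" by (rule card_mono[rotated])
  also have "\<dots> \<le> card ({..<l} - {n})" by (rule card_image_le) simp
  also have "\<dots> = l - 1" using n by simp
  finally have cU: "card U < k" using n lk by linarith
  obtain D where D: "D \<in> lab (u n) (w n)" "D \<notin> U"
  proof -
    have "\<not> lab (u n) (w n) \<subseteq> U"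
    proof
      assume "lab (u n) (w n) \<subseteq> U"
      moreover have "U \<subseteq> Pos" unfolding U_def using labP(1) by blast
      then have "finite U" using finP by (rule finite_subset)
      ultimately have "card (lab (u n) (w n)) \<le> card U" by (rule card_mono[rotated])
      then show False using cU cardlab by simp
    qed
    then show ?thesis using that by blast
  qed
  have DP: "D \<in> Pos" using D(1) labP(1) by blast
  then have Dc: "D \<in> ?comps" and posD: "0 < qval E D (u n) (w n)" unfolding Pos_def by auto
  have qCD: "qval E C (u n) (w n) \<le> qval E D (u n) (w n)" using labP(3) D(1) CP Cnl by blast
  have finD: "finite D" using comp_finite[OF finV Dc] .
  have ctD: "is_clique E D \<or> is_tree E D" using comps Dc by blast
  obtain J0 where J0: "J0 \<noteq> []" "distinct J0" "set J0 \<subseteq> D" "successively E (u n # J0 @ [w n])"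
      "qval E D (u n) (w n) \<le> ereal (real (length J0 + 1))"
    using q_upper[OF sym finD ctD posD] by blast
  have "ereal (real (length (J n) + 1)) \<le> ereal (real (length J0 + 1))"
    using qC qCD J0(5) by (meson order_trans)
  then have len: "length (J n) \<le> length J0" by simp
  have disj: "\<forall>j<l. j \<noteq> n \<longrightarrow> set (J j) \<inter> D = {}" using D unfolding U_def by blast
  show ?thesis using J0 len D(1) Dc disj by blast
qed



lemma succ_edge_in:
  assumes "successively E (a # p @ [z])" "x \<in> set p"
  shows "\<exists>y. E x y"
proof -
  obtain j where j: "j < length p" "x = p ! j" using assms(2) by (auto simp: in_set_conv_nth)
  have "Suc (Suc j) < length (a # p @ [z])" using j by simp
  then have "E ((a # p @ [z]) ! Suc j) ((a # p @ [z]) ! Suc (Suc j))"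
    using assms(1) by (rule successively_nth[rotated])
  moreover have "(a # p @ [z]) ! Suc j = x" using j by (simp add: nth_append)
  ultimately show ?thesis by blast
qed

theorem mainTheorem18:
  fixes V :: "'a set" and E :: "'a \<Rightarrow> 'a \<Rightarrow> bool" and S :: "'a set" and k :: nat
    and lab :: "'a \<Rightarrow> 'a \<Rightarrow> 'a set set"
    and xs :: "'a list" and frags :: "('a \<times> 'a list) list"
  assumes G: "simple_graph V E"
    and SV: "S \<subseteq> V" and card_S: "card S = k"
    and comps: "\<forall>C \<in> components V E S. is_clique E C \<or> is_tree E C"
    and lab: "valid_labeling V E S k lab"
    and P: "is_cycle E xs"
    and frag: "fragment_decomp S xs frags"
  shows "\<exists>ys frags'. is_cycle E ys \<and> fragment_decomp S ys frags' \<and>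
           length frags' = length frags \<and>
           (\<forall>i < length frags. fst (frags' ! i) = fst (frags ! i)) \<and>
           (\<forall>i < length frags. snd (frags' ! i) \<noteq> [] \<longrightarrow>
              (\<exists>C \<in> lab (fst (frags ! i)) (fst (frags ! ((Suc i) mod length frags))).
                  set (snd (frags' ! i)) \<subseteq> C)) \<and>
           length xs \<le> length ys"
proof -
  have finV: "finite V" using G unfolding simple_graph_def by blast
  have EV: "\<forall>x y. E x y \<longrightarrow> x \<in> V \<and> y \<in> V" using G unfolding simple_graph_def by blast
  have sym: "\<forall>x y. E x y \<longrightarrow> E y x" using G unfolding simple_graph_def by blast
  define l where "l = length frags"
  have fne: "frags \<noteq> []" using frag unfolding fragment_decomp_def by blast
  have xs_def: "xs = concat (map (\<lambda>(v,I). v#I) frags)" using frag unfolding fragment_decomp_def by blast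
  have fS: "\<forall>(v,I)\<in>set frags. v \<in> S \<and> set I \<inter> S = {}" using frag unfolding fragment_decomp_def by blast
  have l0: "0 < l" using fne unfolding l_def by simp
  define u where "u i = fst (frags ! i)" for i
  define I where "I i = snd (frags ! i)" for i
  define w where "w i = u (Suc i mod l)" for i
  have cyc: "3 \<le> length xs \<and>
    (\<forall>i<l. distinct (u i # I i)) \<and>
    (\<forall>i<l. \<forall>j<l. i\<noteq>j \<longrightarrow> set (u i # I i) \<inter> set (u j # I j) = {}) \<and>
    (\<forall>i<l. successively E (u i # I i @ [w i]))"
    using P unfolding xs_def cyc_frags[OF fne] u_def I_def w_def l_def .
  then have P3: "3 \<le> length xs" and Pd: "\<forall>i<l. distinct (u i # I i)"
    and Pdisj: "\<forall>i<l. \<forall>j<l. i\<noteq>j \<longrightarrow> set (u i # I i) \<inter> set (u j # I j) = {}"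
    and Ps: "\<forall>i<l. successively E (u i # I i @ [w i])" by blast+
  have fS': "\<forall>x\<in>set frags. fst x \<in> S \<and> set (snd x) \<inter> S = {}" using fS by (auto simp: case_prod_beta)
  have uS: "\<forall>i<l. u i \<in> S" and IS: "\<forall>i<l. set (I i) \<inter> S = {}"
    using fS' unfolding u_def I_def l_def by simp_all
  have wS: "\<forall>i<l. w i \<in> S" using uS l0 unfolding w_def by simp
  have IV: "\<forall>i<l. set (I i) \<subseteq> V"
  proof (intro allI impI subsetI)
    fix i x assume ix: "i < l" "x \<in> set (I i)"
    obtain y where "E x y" using succ_edge_in[OF Ps[rule_format, OF ix(1)] ix(2)] by blast
    then show "x \<in> V" using EV by blast
  qed
  have inj: "inj_on u {..<l}"
  proof (rule inj_onI)
    fix i j assume "i \<in> {..<l}" "j \<in> {..<l}" "u i = u j"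
    show "i = j"
    proof (rule ccontr)
      assume "i \<noteq> j"
      then have "set (u i # I i) \<inter> set (u j # I j) = {}" using Pdisj \<open>i \<in> {..<l}\<close> \<open>j \<in> {..<l}\<close> by simp
      then show False using \<open>u i = u j\<close> by simp
    qed
  qed
  have finS: "finite S" using SV finV by (rule finite_subset)
  have "card {..<l} \<le> card S"
    using inj _ finS by (rule card_inj_on_le) (use uS in auto)
  then have lk: "l \<le> k" using card_S by simp
  define Inv where "Inv n J \<longleftrightarrow> (\<forall>i<l. successively E (u i # J i @ [w i])) \<and> (\<forall>i<l. distinct (J i)) \<and>
     (\<forall>i<l. length (I i) \<le> length (J i)) \<and> (\<forall>i<l. J i \<noteq> [] \<longrightarrow> (\<exists>D\<in>components V E S. set (J i) \<subseteq> D)) \<and>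
     (\<forall>i<l. \<forall>j<l. i\<noteq>j \<longrightarrow> set (J i) \<inter> set (J j) = {}) \<and>
     (\<forall>i<n. J i \<noteq> [] \<longrightarrow> (\<exists>C\<in>lab (u i) (w i). set (J i) \<subseteq> C))" for n and J :: "nat \<Rightarrow> 'a list"
  have base: "Inv 0 I"
  proof -
    have "\<forall>i<l. distinct (I i)" using Pd by simp
    moreover have "\<forall>i<l. I i \<noteq> [] \<longrightarrow> (\<exists>D\<in>components V E S. set (I i) \<subseteq> D)"
    proof (intro allI impI)
      fix i assume i: "i < l" "I i \<noteq> []"
      have "successively E (I i)" using succ_split(3)[OF i(2)] Ps i(1) by blast
      moreover have "set (I i) \<subseteq> V - S" using IV IS i(1) by blast
      ultimately show "\<exists>D\<in>components V E S. set (I i) \<subseteq> D" by (rule chain_in_comp[OF i(2)])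
    qed
    moreover have "\<forall>i<l. \<forall>j<l. i\<noteq>j \<longrightarrow> set (I i) \<inter> set (I j) = {}" using Pdisj by auto
    ultimately show ?thesis unfolding Inv_def using Ps by blast
  qed
  have step: "\<exists>J'. Inv (Suc n) J'" if n: "n < l" and inv: "Inv n J" for n J
  proof -
    have a: "\<forall>i<l. successively E (u i # J i @ [w i])" and b: "\<forall>i<l. distinct (J i)"
      and c: "\<forall>i<l. length (I i) \<le> length (J i)"
      and d: "\<forall>i<l. J i \<noteq> [] \<longrightarrow> (\<exists>D\<in>components V E S. set (J i) \<subseteq> D)"
      and e: "\<forall>i<l. \<forall>j<l. i\<noteq>j \<longrightarrow> set (J i) \<inter> set (J j) = {}"
      and g: "\<forall>i<n. J i \<noteq> [] \<longrightarrow> (\<exists>C\<in>lab (u i) (w i). set (J i) \<subseteq> C)"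
      using inv unfolding Inv_def by blast+
    show ?thesis
    proof (cases "J n \<noteq> [] \<and> \<not> (\<exists>C\<in>lab (u n) (w n). set (J n) \<subseteq> C)")
      case False
      then have "\<forall>i<Suc n. J i \<noteq> [] \<longrightarrow> (\<exists>C\<in>lab (u i) (w i). set (J i) \<subseteq> C)"
      proof (intro allI impI)
        fix i assume i: "i < Suc n" "J i \<noteq> []"
        show "\<exists>C\<in>lab (u i) (w i). set (J i) \<subseteq> C"
        proof (cases "i = n")
          case True then show ?thesis using False i(2) by blast
        next
          case False then have "i < n" using i(1) by simp
          then show ?thesis using g i(2) by blast
        qed
      qed
      then have "Inv (Suc n) J" using a b c d e unfolding Inv_def by blast
      then show ?thesis by blast
    next
      case True
      obtain J0 D where JD: "J0 \<noteq> []" "distinct J0" "successively E (u n # J0 @ [w n])" "length (J n) \<le> length J0"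
        "D \<in> lab (u n) (w n)" "D \<in> components V E S" "set J0 \<subseteq> D" "\<forall>j<l. j \<noteq> n \<longrightarrow> set (J j) \<inter> D = {}"
        using step_lemma[where u=u and w=w and J=J, OF sym finV comps lab lk n uS[rule_format, OF n] wS[rule_format, OF n]
           a[rule_format, OF n] b[rule_format, OF n] d conjunct1[OF True] conjunct2[OF True]] by blast
      define J' where "J' = J(n := J0)"
      have a': "\<forall>i<l. successively E (u i # J' i @ [w i])" using a JD(3) unfolding J'_def by simp
      have b': "\<forall>i<l. distinct (J' i)" using b JD(2) unfolding J'_def by simp
      have c': "\<forall>i<l. length (I i) \<le> length (J' i)"
      proof (intro allI impI)
        fix i assume i: "i < l"
        show "length (I i) \<le> length (J' i)"
        proof (cases "i = n")
          case True
          have "length (I n) \<le> length (J n)" using c n by simp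
          then show ?thesis using JD(4) True unfolding J'_def by simp
        next
          case False then show ?thesis using c i unfolding J'_def by simp
        qed
      qed
      have d': "\<forall>i<l. J' i \<noteq> [] \<longrightarrow> (\<exists>D\<in>components V E S. set (J' i) \<subseteq> D)"
      proof (intro allI impI)
        fix i assume i: "i < l" "J' i \<noteq> []"
        show "\<exists>D\<in>components V E S. set (J' i) \<subseteq> D"
        proof (cases "i = n")
          case True then show ?thesis using JD(6,7) unfolding J'_def by auto
        next
          case False then show ?thesis using d i unfolding J'_def by simp
        qed
      qed
      have e': "\<forall>i<l. \<forall>j<l. i\<noteq>j \<longrightarrow> set (J' i) \<inter> set (J' j) = {}"
      proof (intro allI impI)
        fix i j assume ij: "i < l" "j < l" "i \<noteq> j"
        show "set (J' i) \<inter> set (J' j) = {}"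
        proof (cases "i = n")
          case True
          then show ?thesis using JD(7,8) ij unfolding J'_def by auto
        next
          case False
          show ?thesis
          proof (cases "j = n")
            case True
            then show ?thesis using JD(7,8) ij False unfolding J'_def by auto
          next
            case False
            then show ?thesis using e ij \<open>i \<noteq> n\<close> unfolding J'_def by simp
          qed
        qed
      qed
      have g': "\<forall>i<Suc n. J' i \<noteq> [] \<longrightarrow> (\<exists>C\<in>lab (u i) (w i). set (J' i) \<subseteq> C)"
      proof (intro allI impI)
        fix i assume i: "i < Suc n" "J' i \<noteq> []"
        show "\<exists>C\<in>lab (u i) (w i). set (J' i) \<subseteq> C"
        proof (cases "i = n")
          case True then show ?thesis using JD(5,7) unfolding J'_def by auto
        next
          case False
          then have "i < n" "J' i = J i" using i(1) unfolding J'_def by auto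
          then show ?thesis using g i(2) by simp
        qed
      qed
      have "Inv (Suc n) J'" unfolding Inv_def using a' b' c' d' e' g' by blast
      then show ?thesis by blast
    qed
  qed
  have "\<exists>J. Inv n J" if "n \<le> l" for n
    using that
  proof (induction n)
    case 0 then show ?case using base by blast
  next
    case (Suc n)
    then obtain J where "Inv n J" by auto
    then show ?case using step[of n J] Suc.prems by auto
  qed
  then obtain J where inv: "Inv l J" by blast
  have a: "\<forall>i<l. successively E (u i # J i @ [w i])" and b: "\<forall>i<l. distinct (J i)"
      and c: "\<forall>i<l. length (I i) \<le> length (J i)"
      and d: "\<forall>i<l. J i \<noteq> [] \<longrightarrow> (\<exists>D\<in>components V E S. set (J i) \<subseteq> D)"
      and e: "\<forall>i<l. \<forall>j<l. i\<noteq>j \<longrightarrow> set (J i) \<inter> set (J j) = {}"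
      and g: "\<forall>i<l. J i \<noteq> [] \<longrightarrow> (\<exists>C\<in>lab (u i) (w i). set (J i) \<subseteq> C)"
      using inv unfolding Inv_def by blast+
  have JS: "\<forall>i<l. set (J i) \<inter> S = {}"
  proof (intro allI impI)
    fix i assume i: "i < l"
    show "set (J i) \<inter> S = {}"
    proof (cases "J i = []")
      case False
      then obtain D where "D \<in> components V E S" "set (J i) \<subseteq> D" using d i by blast
      then show ?thesis using comp_sub[of D V E S] by blast
    qed simp
  qed
  define frags' where "frags' = map (\<lambda>i. (u i, J i)) [0..<l]"
  define ys where "ys = concat (map (\<lambda>(v,I). v#I) frags')"
  have lf': "length frags' = l" unfolding frags'_def by simp
  have f'ne: "frags' \<noteq> []" using l0 unfolding frags'_def by simp
  have nth': "frags' ! i = (u i, J i)" if "i < l" for i using that unfolding frags'_def by simp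
  have frags_eq: "frags = map (\<lambda>i. (u i, I i)) [0..<l]"
    by (rule nth_equalityI) (simp_all add: l_def u_def I_def)
  have lxs: "length xs = (\<Sum>i<l. Suc (length (I i)))"
    unfolding xs_def by (subst frags_eq) (rule len_frags)
  have lys: "length ys = (\<Sum>i<l. Suc (length (J i)))"
    unfolding ys_def frags'_def by (rule len_frags)
  have len: "length xs \<le> length ys" unfolding lxs lys
    by (rule sum_mono) (use c in simp)
  have uinj: "u i \<noteq> u j" if "i < l" "j < l" "i \<noteq> j" for i j
  proof
    assume "u i = u j"
    then have "i = j" using inj_onD[OF inj] that by simp
    then show False using that by simp
  qed
  have cycys: "is_cycle E ys"
    unfolding ys_def cyc_frags[OF f'ne] lf'
  proof (intro conjI allI impI)
    show "3 \<le> length (concat (map (\<lambda>(v, I). v # I) frags'))" using P3 len unfolding ys_def by simp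
  next
    fix i assume i: "i < l"
    show "distinct (fst (frags' ! i) # snd (frags' ! i))"
      using nth'[OF i] b uS JS i by auto
  next
    fix i j assume ij: "i < l" "j < l" "i \<noteq> j"
    have "u i \<notin> set (J j)" "u j \<notin> set (J i)" using uS JS ij by blast+
    then show "set (fst (frags' ! i) # snd (frags' ! i)) \<inter> set (fst (frags' ! j) # snd (frags' ! j)) = {}"
      using nth'[OF ij(1)] nth'[OF ij(2)] e ij uinj[OF ij] by auto
  next
    fix i assume i: "i < l"
    have "Suc i mod l < l" using l0 by simp
    then show "successively E (fst (frags' ! i) # snd (frags' ! i) @ [fst (frags' ! (Suc i mod l))])"
      using nth'[OF i] nth' a i unfolding w_def by simp
  qed
  have fd: "fragment_decomp S ys frags'"
    unfolding fragment_decomp_def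
  proof (intro conjI)
    show "frags' \<noteq> []" by (rule f'ne)
    show "ys = concat (map (\<lambda>(v, I). v # I) frags')" by (rule ys_def)
    show "\<forall>(v, I)\<in>set frags'. v \<in> S \<and> set I \<inter> S = {}"
      unfolding frags'_def using uS JS by auto
  qed
  show ?thesis
  proof (intro exI conjI)
    show "is_cycle E ys" by (rule cycys)
    show "fragment_decomp S ys frags'" by (rule fd)
    show "length frags' = length frags" using lf' l_def by simp
    show "\<forall>i<length frags. fst (frags' ! i) = fst (frags ! i)"
      using nth' unfolding l_def u_def by simp
    show "\<forall>i<length frags. snd (frags' ! i) \<noteq> [] \<longrightarrow>
      (\<exists>C\<in>lab (fst (frags ! i)) (fst (frags ! (Suc i mod length frags))). set (snd (frags' ! i)) \<subseteq> C)"
      using nth' g unfolding l_def u_def w_def by simp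
    show "length xs \<le> length ys" by (rule len)
  qed
qed

end
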